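(* Let $(\mathbf X(t),\mathbf V(t),\tilde{\mathbf D}(t),\mathbf B(t))$ be a continuously differentiable solution of $$\frac{d\mathbf X_p}{dt}=\mathbf V_p,\qquad \frac{dV_{p,\alpha}}{dt}=\frac qm\Big((\tilde{\mathbb H}_2\tilde{\mathbf D})^\alpha\cdot\tilde{\mathcal R}_2^\alpha(S_p)+(\mathbf V_p\times\mathbf b_p)_\alpha\Big),$$ $$\frac{d\mathbf B}{dt}=-\mathbb C\tilde{\mathbb H}_2\tilde{\mathbf D},\qquad \frac{d\tilde{\mathbf D}}{dt}=\mathbb C^\top\mathbb H_2\mathbf B-\sum_{p=1}^{N_p}w_pq\,\tilde{\mathcal R}_2(\mathbf V_pS_p),$$ for $p=1,\dots,N_p$, $\alpha\in\{x,y,z\}$. If at $t=0$ $$\tilde{\mathbb D}\tilde{\mathbf D}=\sum_{p=1}^{N_p}w_pq\,\tilde{\mathcal R}_3(S_p)\quad\text{and}\quad\mathbb D\mathbf B=0,$$ then both identities hold for all $t$ for which the solution exists.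
   Context: Periodic box $\Omega=[0,L_1)\times[0,L_2)\times[0,L_3)$ with primal nodes $(x_i,y_j,z_k)$ (extended periodically) and dual nodes at midpoints $(x_{i+\frac12},y_{j+\frac12},z_{k+\frac12})$, $x_{i+\frac12}=\frac{x_i+x_{i+1}}2$; $M=M_1M_2M_3$ nodes; arrays indexed periodically by $(i,j,k)$. Forward differences $(\delta_xf)_{ijk}=f_{i+1,j,k}-f_{ijk}$ and backward differences $(\tilde\delta_xf)_{ijk}=f_{ijk}-f_{i-1,j,k}$ (similarly in $y,z$). $\mathbb C(E^x,E^y,E^z)=(\delta_yE^z-\delta_zE^y,\delta_zE^x-\delta_xE^z,\delta_xE^y-\delta_yE^x)$, $\mathbb D(B^x,B^y,B^z)=\sum_\alpha\delta_\alpha B^\alpha$, $\tilde{\mathbb D}(D^x,D^y,D^z)=\sum_\alpha\tilde\delta_\alpha D^\alpha$. $\mathbb H_2,\tilde{\mathbb H}_2$ are given $3M\times3M$ matrices (symmetric positive definite discrete Hodge operators). Particles $p$ have weights $w_p>0$, charge $q$, mass $m>0$; $S$ is a continuously differentiable $\Omega$-periodic kernel, $S_p(\mathbf x)=S(\mathbf x-\mathbf X_p)$. Dual reductions of scalar $g$: $\tilde{\mathcal R}_1^x(g)_{ijk}=\int_{x_{i-\frac12}}^{x_{i+\frac12}}g(x,y_{j+\frac12},z_{k+\frac12})dx$ (analogously $y,z$); $\tilde{\mathcal R}_2^x(g)_{ijk}=\int_{y_{j-\frac12}}^{y_{j+\frac12}}\int_{z_{k-\frac12}}^{z_{k+\frac12}}g(x_{i+\frac12},y,z)dz\,dy$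 (analogously $y,z$); $\tilde{\mathcal R}_3(g)_{ijk}=\int_{[x_{i-\frac12},x_{i+\frac12}]\times[y_{j-\frac12},y_{j+\frac12}]\times[z_{k-\frac12},z_{k+\frac12}]}g$. For a vector $\mathbf v\in\mathbb R^3$, $\tilde{\mathcal R}_2(\mathbf vS_p)$ is the vector array with components $v_\alpha\tilde{\mathcal R}_2^\alpha(S_p)$. $\mathbf b_p=(\mathbf B^x\cdot\tilde{\mathcal R}_1^x(S_p),\mathbf B^y\cdot\tilde{\mathcal R}_1^y(S_p),\mathbf B^z\cdot\tilde{\mathcal R}_1^z(S_p))$. *)

theory Defs
  imports "HOL-Analysis.Analysis" "HOL-Analysis.Cross3"
begin

text \<open>Axes are numbered 0,1,2 (= x,y,z). A grid index is a triple
  (i,j,k) with i < M 0, j < M 1, k < M 2; arrays are functions on such triples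
  (only values on Idx M matter), indices wrap around periodically.
  Vector arrays are functions nat => idx => real (component alpha in {0,1,2}).
  The 3M x 3M matrices are functions on (nat * idx) x (nat * idx).
  Primal node coordinates along axis alpha are g alpha i (i :: int, periodically
  extended: g alpha (i + M alpha) = g alpha i + L alpha).\<close>

type_synonym idx = "nat \<times> nat \<times> nat"

definition Idx :: "(nat \<Rightarrow> nat) \<Rightarrow> idx set" where
  "Idx M = {0..<M 0} \<times> {0..<M 1} \<times> {0..<M 2}"

definition nxt :: "(nat \<Rightarrow> nat) \<Rightarrow> nat \<Rightarrow> idx \<Rightarrow> idx" where
  "nxt M a n = (case n of (i,j,k) \<Rightarrow>
      if a = 0 then ((i+1) mod M 0, j, k)
      else if a = 1 then (i, (j+1) mod M 1, k)
      else (i, j, (k+1) mod M 2))"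

definition prv :: "(nat \<Rightarrow> nat) \<Rightarrow> nat \<Rightarrow> idx \<Rightarrow> idx" where
  "prv M a n = (case n of (i,j,k) \<Rightarrow>
      if a = 0 then ((i + M 0 - 1) mod M 0, j, k)
      else if a = 1 then (i, (j + M 1 - 1) mod M 1, k)
      else (i, j, (k + M 2 - 1) mod M 2))"

definition fdiff :: "(nat \<Rightarrow> nat) \<Rightarrow> nat \<Rightarrow> (idx \<Rightarrow> real) \<Rightarrow> idx \<Rightarrow> real" where
  "fdiff M a f n = f (nxt M a n) - f n"

definition bdiff :: "(nat \<Rightarrow> nat) \<Rightarrow> nat \<Rightarrow> (idx \<Rightarrow> real) \<Rightarrow> idx \<Rightarrow> real" where
  "bdiff M a f n = f n - f (prv M a n)"

definition curl :: "(nat \<Rightarrow> nat) \<Rightarrow> (nat \<Rightarrow> idx \<Rightarrow> real) \<Rightarrow> nat \<Rightarrow> idx \<Rightarrow> real" where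
  "curl M E a n =
     (if a = 0 then fdiff M 1 (E 2) n - fdiff M 2 (E 1) n
      else if a = 1 then fdiff M 2 (E 0) n - fdiff M 0 (E 2) n
      else fdiff M 0 (E 1) n - fdiff M 1 (E 0) n)"

definition ddiv :: "(nat \<Rightarrow> nat) \<Rightarrow> (nat \<Rightarrow> idx \<Rightarrow> real) \<Rightarrow> idx \<Rightarrow> real" where
  "ddiv M B n = (\<Sum>a<3. fdiff M a (B a) n)"

definition ddiv_dual :: "(nat \<Rightarrow> nat) \<Rightarrow> (nat \<Rightarrow> idx \<Rightarrow> real) \<Rightarrow> idx \<Rightarrow> real" where
  "ddiv_dual M D n = (\<Sum>a<3. bdiff M a (D a) n)"

text \<open>transpose of C: (C^T F)_(b,m) = sum_(a,n) C_((a,n),(b,m)) F_(a,n), where the matrix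
  entries of C are obtained by applying C to unit arrays\<close>
definition unit_arr :: "nat \<Rightarrow> idx \<Rightarrow> nat \<Rightarrow> idx \<Rightarrow> real" where
  "unit_arr b m = (\<lambda>c l. if c = b \<and> l = m then 1 else 0)"

definition curl_T :: "(nat \<Rightarrow> nat) \<Rightarrow> (nat \<Rightarrow> idx \<Rightarrow> real) \<Rightarrow> nat \<Rightarrow> idx \<Rightarrow> real" where
  "curl_T M F b m = (\<Sum>a<3. \<Sum>n\<in>Idx M. curl M (unit_arr b m) a n * F a n)"

definition mat_app :: "(nat \<times> idx \<Rightarrow> nat \<times> idx \<Rightarrow> real) \<Rightarrow> (nat \<Rightarrow> nat)
    \<Rightarrow> (nat \<Rightarrow> idx \<Rightarrow> real) \<Rightarrow> nat \<Rightarrow> idx \<Rightarrow> real" where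
  "mat_app H M E a n = (\<Sum>b<3. \<Sum>m\<in>Idx M. H (a,n) (b,m) * E b m)"

definition spd :: "(nat \<Rightarrow> nat) \<Rightarrow> (nat \<times> idx \<Rightarrow> nat \<times> idx \<Rightarrow> real) \<Rightarrow> bool" where
  "spd M H \<longleftrightarrow>
     (\<forall>u\<in>{..<3} \<times> Idx M. \<forall>v\<in>{..<3} \<times> Idx M. H u v = H v u) \<and>
     (\<forall>E :: nat \<times> idx \<Rightarrow> real. (\<exists>u\<in>{..<3} \<times> Idx M. E u \<noteq> 0) \<longrightarrow>
        0 < (\<Sum>u\<in>{..<3} \<times> Idx M. \<Sum>v\<in>{..<3} \<times> Idx M. E u * H u v * E v))"

definition grid_ok :: "(nat \<Rightarrow> nat) \<Rightarrow> (nat \<Rightarrow> real) \<Rightarrow> (nat \<Rightarrow> int \<Rightarrow> real) \<Rightarrow> bool" where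
  "grid_ok M L g \<longleftrightarrow> (\<forall>a<3. 0 < M a \<and> 0 < L a \<and> strict_mono (g a) \<and>
      (\<forall>i. g a (i + int (M a)) = g a i + L a) \<and>
      0 \<le> g a 0 \<and> g a (int (M a) - 1) < L a)"

text \<open>half (dual) node coordinate x_(i+1/2)\<close>
definition hn :: "(nat \<Rightarrow> int \<Rightarrow> real) \<Rightarrow> nat \<Rightarrow> int \<Rightarrow> real" where
  "hn g a i = (g a i + g a (i + 1)) / 2"

definition pt :: "real \<Rightarrow> real \<Rightarrow> real \<Rightarrow> real^3" where
  "pt a b c = vector [a, b, c]"

definition comp3 :: "real^3 \<Rightarrow> nat \<Rightarrow> real" where
  "comp3 v a = (if a = 0 then v $ 1 else if a = 1 then v $ 2 else v $ 3)"

definition R1 :: "(nat \<Rightarrow> int \<Rightarrow> real) \<Rightarrow> (real^3 \<Rightarrow> real) \<Rightarrow> nat \<Rightarrow> idx \<Rightarrow> real" where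
  "R1 g f a n = (case n of (i,j,k) \<Rightarrow>
     if a = 0 then integral {hn g 0 (int i - 1)..hn g 0 (int i)}
                     (\<lambda>s. f (pt s (hn g 1 (int j)) (hn g 2 (int k))))
     else if a = 1 then integral {hn g 1 (int j - 1)..hn g 1 (int j)}
                     (\<lambda>s. f (pt (hn g 0 (int i)) s (hn g 2 (int k))))
     else integral {hn g 2 (int k - 1)..hn g 2 (int k)}
                     (\<lambda>s. f (pt (hn g 0 (int i)) (hn g 1 (int j)) s)))"

definition R2 :: "(nat \<Rightarrow> int \<Rightarrow> real) \<Rightarrow> (real^3 \<Rightarrow> real) \<Rightarrow> nat \<Rightarrow> idx \<Rightarrow> real" where
  "R2 g f a n = (case n of (i,j,k) \<Rightarrow>
     if a = 0 then integral ({hn g 1 (int j - 1)..hn g 1 (int j)} \<times> {hn g 2 (int k - 1)..hn g 2 (int k)})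
                     (\<lambda>(y,z). f (pt (hn g 0 (int i)) y z))
     else if a = 1 then integral ({hn g 0 (int i - 1)..hn g 0 (int i)} \<times> {hn g 2 (int k - 1)..hn g 2 (int k)})
                     (\<lambda>(x,z). f (pt x (hn g 1 (int j)) z))
     else integral ({hn g 0 (int i - 1)..hn g 0 (int i)} \<times> {hn g 1 (int j - 1)..hn g 1 (int j)})
                     (\<lambda>(x,y). f (pt x y (hn g 2 (int k)))))"

definition R3 :: "(nat \<Rightarrow> int \<Rightarrow> real) \<Rightarrow> (real^3 \<Rightarrow> real) \<Rightarrow> idx \<Rightarrow> real" where
  "R3 g f n = (case n of (i,j,k) \<Rightarrow>
     integral ({hn g 0 (int i - 1)..hn g 0 (int i)} \<times> {hn g 1 (int j - 1)..hn g 1 (int j)}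
               \<times> {hn g 2 (int k - 1)..hn g 2 (int k)})
       (\<lambda>(x,y,z). f (pt x y z)))"

definition kshift :: "(real^3 \<Rightarrow> real) \<Rightarrow> real^3 \<Rightarrow> real^3 \<Rightarrow> real" where
  "kshift S Xp = (\<lambda>x. S (x - Xp))"

definition efield_p :: "(nat \<Rightarrow> nat) \<Rightarrow> (nat \<Rightarrow> int \<Rightarrow> real) \<Rightarrow> (nat \<times> idx \<Rightarrow> nat \<times> idx \<Rightarrow> real)
    \<Rightarrow> (nat \<Rightarrow> idx \<Rightarrow> real) \<Rightarrow> (real^3 \<Rightarrow> real) \<Rightarrow> real^3" where
  "efield_p M g Ht D Sp = pt
     (\<Sum>n\<in>Idx M. mat_app Ht M D 0 n * R2 g Sp 0 n)
     (\<Sum>n\<in>Idx M. mat_app Ht M D 1 n * R2 g Sp 1 n)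
     (\<Sum>n\<in>Idx M. mat_app Ht M D 2 n * R2 g Sp 2 n)"

definition bfield_p :: "(nat \<Rightarrow> nat) \<Rightarrow> (nat \<Rightarrow> int \<Rightarrow> real)
    \<Rightarrow> (nat \<Rightarrow> idx \<Rightarrow> real) \<Rightarrow> (real^3 \<Rightarrow> real) \<Rightarrow> real^3" where
  "bfield_p M g B Sp = pt
     (\<Sum>n\<in>Idx M. B 0 n * R1 g Sp 0 n)
     (\<Sum>n\<in>Idx M. B 1 n * R1 g Sp 1 n)
     (\<Sum>n\<in>Idx M. B 2 n * R1 g Sp 2 n)"

definition c1_on :: "real set \<Rightarrow> (real \<Rightarrow> real) \<Rightarrow> bool" where
  "c1_on T f \<longleftrightarrow> (\<exists>f'. (\<forall>t\<in>T. (f has_real_derivative f' t) (at t within T)) \<and> continuous_on T f')"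

end

theory Submission
  imports Defs "HOL-Analysis.Analysis" "HOL-Analysis.Cross3"
begin


lemma sum3: "(\<Sum>a<(3::nat). f a) = f 0 + f 1 + (f 2 :: 'a::comm_monoid_add)"
  by (simp add: eval_nat_numeral)

lemma finite_Idx[simp]: "finite (Idx M)" by (simp add: Idx_def)

lemma nxt_prv_comm: "nxt M a (nxt M b n) = nxt M b (nxt M a n)"
  by (cases n) (auto simp: nxt_def)

lemma prv_prv_comm: "prv M a (prv M b n) = prv M b (prv M a n)"
  by (cases n) (auto simp: prv_def)

lemma ddiv_curl: "ddiv M (curl M E) n = 0"
  unfolding ddiv_def sum3 curl_def fdiff_def
  by (simp add: nxt_prv_comm)

definition bcurl :: "(nat \<Rightarrow> nat) \<Rightarrow> (nat \<Rightarrow> idx \<Rightarrow> real) \<Rightarrow> nat \<Rightarrow> idx \<Rightarrow> real" where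
  "bcurl M F b m = (if b = 0 then bdiff M 1 (F 2) m - bdiff M 2 (F 1) m
      else if b = 1 then bdiff M 2 (F 0) m - bdiff M 0 (F 2) m
      else bdiff M 0 (F 1) m - bdiff M 1 (F 0) m)"

lemma ddiv_bcurl: "ddiv_dual M (bcurl M F) n = 0"
  unfolding ddiv_dual_def sum3 bcurl_def bdiff_def
  by (simp add: prv_prv_comm)

lemma mod_pred_aux: assumes "(0::nat) < N" "m < N" shows "Suc ((m + N - Suc 0) mod N) mod N = m"
proof (cases m)
  case 0
  have "N - Suc 0 < N" using assms by simp
  then have "(N - Suc 0) mod N = N - Suc 0" by simp
  then show ?thesis using 0 assms by simp
next
  case (Suc k)
  have e: "m + N - Suc 0 = k + N" using Suc by simp
  have "k < N" using Suc assms by simp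
  then have "(k + N) mod N = k" by simp
  then show ?thesis using e Suc assms by simp
qed

lemma mod_suc_aux: "(0::nat) < N \<Longrightarrow> i < N \<Longrightarrow> (Suc i mod N + N - Suc 0) mod N = i"
proof (cases "i + 1 = N")
  case True assume "0 < N" then show ?thesis using True by simp
next
  case False assume "0 < N" "i < N" then show ?thesis using False by simp
qed

lemma Idx_pos: "(\<forall>a<(3::nat). 0 < M a) \<Longrightarrow> 0 < M 0 \<and> 0 < M 1 \<and> 0 < M 2" by auto

lemma nxt_Idx: "(\<forall>a<3. 0 < M a) \<Longrightarrow> n \<in> Idx M \<Longrightarrow> nxt M a n \<in> Idx M"
  by (cases n) (auto simp: nxt_def Idx_def)

lemma prv_Idx: "(\<forall>a<3. 0 < M a) \<Longrightarrow> n \<in> Idx M \<Longrightarrow> prv M a n \<in> Idx M"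
  by (cases n) (auto simp: prv_def Idx_def)

lemma nxt_prv: "(\<forall>a<3. 0 < M a) \<Longrightarrow> n \<in> Idx M \<Longrightarrow> nxt M a (prv M a n) = n"
  by (cases n) (auto simp: prv_def nxt_def Idx_def mod_pred_aux)

lemma prv_nxt: "(\<forall>a<3. 0 < M a) \<Longrightarrow> n \<in> Idx M \<Longrightarrow> prv M a (nxt M a n) = n"
  by (cases n) (auto simp: prv_def nxt_def Idx_def mod_suc_aux)

lemma by_parts:
  assumes "\<forall>a<3. 0 < M a"
  shows "(\<Sum>n\<in>Idx M. fdiff M c E n * G n) = - (\<Sum>n\<in>Idx M. E n * bdiff M c G n)"
proof -
  have "(\<Sum>n\<in>Idx M. E (nxt M c n) * G n) = (\<Sum>n\<in>Idx M. E n * G (prv M c n))"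
    by (rule sum.reindex_bij_witness[where i="prv M c" and j="nxt M c"])
       (use assms in \<open>auto simp: nxt_Idx prv_Idx nxt_prv prv_nxt\<close>)
  then show ?thesis
    by (simp add: fdiff_def bdiff_def algebra_simps sum_subtractf)
qed

lemma by_parts':
  assumes "\<forall>a<3. 0 < M a"
  shows "(\<Sum>n\<in>Idx M. G n * fdiff M c E n) = - (\<Sum>n\<in>Idx M. E n * bdiff M c G n)"
  using by_parts[OF assms, of c E G] by (simp add: mult.commute)

lemma by_parts2:
  assumes "\<forall>a<3. 0 < M a"
  shows "(\<Sum>n\<in>Idx M. (fdiff M c E n - fdiff M d E' n) * G n) = (\<Sum>n\<in>Idx M. E' n * bdiff M d G n - E n * bdiff M c G n)"
  using by_parts[OF assms, of c E G] by_parts[OF assms, of d E' G]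
  by (simp add: left_diff_distrib sum_subtractf)

lemma curl_T_eq:
  assumes M: "\<forall>a<3. 0 < M a" and b: "b < 3" and m: "m \<in> Idx M"
  shows "curl_T M F b m = bcurl M F b m"
proof -
  have gen: "(\<Sum>a<3. \<Sum>n\<in>Idx M. curl M E a n * F a n) = (\<Sum>a<3. \<Sum>n\<in>Idx M. E a n * bcurl M F a n)" for E
  proof -
    have "(\<Sum>a<3. \<Sum>n\<in>Idx M. curl M E a n * F a n) =
       (\<Sum>n\<in>Idx M. (fdiff M 1 (E 2) n - fdiff M 2 (E 1) n) * F 0 n) +
       (\<Sum>n\<in>Idx M. (fdiff M 2 (E 0) n - fdiff M 0 (E 2) n) * F 1 n) +
       (\<Sum>n\<in>Idx M. (fdiff M 0 (E 1) n - fdiff M 1 (E 0) n) * F 2 n)"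
      by (simp add: sum3 curl_def)
    also have "\<dots> = (\<Sum>n\<in>Idx M. E 1 n * bdiff M 2 (F 0) n - E 2 n * bdiff M 1 (F 0) n) +
       (\<Sum>n\<in>Idx M. E 2 n * bdiff M 0 (F 1) n - E 0 n * bdiff M 2 (F 1) n) +
       (\<Sum>n\<in>Idx M. E 0 n * bdiff M 1 (F 2) n - E 1 n * bdiff M 0 (F 2) n)"
      by (simp only: by_parts2[OF M])
    also have "\<dots> = (\<Sum>n\<in>Idx M. (E 1 n * bdiff M 2 (F 0) n - E 2 n * bdiff M 1 (F 0) n) +
       (E 2 n * bdiff M 0 (F 1) n - E 0 n * bdiff M 2 (F 1) n) +
       (E 0 n * bdiff M 1 (F 2) n - E 1 n * bdiff M 0 (F 2) n))"
      by (simp only: sum.distrib)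
    also have "\<dots> = (\<Sum>n\<in>Idx M. E 0 n * bcurl M F 0 n + E 1 n * bcurl M F 1 n + E 2 n * bcurl M F 2 n)"
      by (rule sum.cong) (simp_all add: bcurl_def algebra_simps)
    also have "\<dots> = (\<Sum>a<3. \<Sum>n\<in>Idx M. E a n * bcurl M F a n)"
      by (simp only: sum3 sum.distrib)
    finally show ?thesis .
  qed
  have "curl_T M F b m = (\<Sum>a<3. \<Sum>n\<in>Idx M. unit_arr b m a n * bcurl M F a n)"
    unfolding curl_T_def gen ..
  also have "\<dots> = bcurl M F b m"
  proof -
    have "b = 0 \<or> b = 1 \<or> b = 2" using b by auto
    then show ?thesis using m unfolding sum3 unit_arr_def
      by (elim disjE) (simp_all add: if_distrib[of "\<lambda>x. x * _"] sum.delta cong: if_cong)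
  qed
  finally show ?thesis .
qed

lemma ddiv_curl_T:
  assumes M: "\<forall>a<3. 0 < M a" and n: "n \<in> Idx M"
  shows "ddiv_dual M (curl_T M F) n = 0"
proof -
  have "ddiv_dual M (curl_T M F) n = ddiv_dual M (bcurl M F) n"
    unfolding ddiv_dual_def bdiff_def
    by (intro sum.cong refl) (simp add: curl_T_eq[OF M _ n] curl_T_eq[OF M _ prv_Idx[OF M n]])
  then show ?thesis by (simp add: ddiv_bcurl)
qed


lemma pt_comp[simp]: "pt a b c $ 1 = a" "pt a b c $ 2 = b" "pt a b c $ 3 = c"
  by (simp_all add: pt_def)

lemma pt_lin: "pt x y z = x *\<^sub>R pt 1 0 0 + y *\<^sub>R pt 0 1 0 + z *\<^sub>R pt 0 0 1"
  by (simp add: vec_eq_iff forall_3)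

lemma continuous_on_pt[continuous_intros]:
  assumes "continuous_on A f" "continuous_on A g" "continuous_on A h"
  shows "continuous_on A (\<lambda>u. pt (f u) (g u) (h u))"
proof -
  have "(\<lambda>u. pt (f u) (g u) (h u)) = (\<lambda>u. f u *\<^sub>R pt 1 0 0 + g u *\<^sub>R pt 0 1 0 + h u *\<^sub>R pt 0 0 1)"
    by (rule ext) (rule pt_lin)
  then show ?thesis by (simp only:) (intro continuous_intros assms)
qed

lemma inner_pt: "v \<bullet> pt 1 0 0 = v $ 1" "v \<bullet> pt 0 1 0 = v $ 2" "v \<bullet> pt 0 0 1 = v $ 3"
  by (simp_all add: inner_vec_def sum_3)

lemma inner3: "h \<bullet> v = h $ 1 * v $ 1 + h $ 2 * v $ 2 + h $ 3 * (v :: real^3) $ 3"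
  by (simp add: inner_vec_def sum_3)

lemma pt_shift: "pt x y z - Y = x *\<^sub>R pt 1 0 0 + (pt 0 y z - Y)"
   "pt x y z - Y = y *\<^sub>R pt 0 1 0 + (pt x 0 z - Y)"
   "pt x y z - Y = z *\<^sub>R pt 0 0 1 + (pt x y 0 - Y)"
  by (simp_all add: vec_eq_iff forall_3)

lemma cbox3: "cbox (a0::real, a1::real, a2::real) (b0, b1, b2) = {a0..b0} \<times> {a1..b1} \<times> {a2..b2}"
  by (simp add: cbox_Pair_eq)

lemma cbox2: "cbox (a0::real, a1::real) (b0, b1) = {a0..b0} \<times> {a1..b1}"
  by (simp add: cbox_Pair_eq)

lemma contc: "continuous_on UNIV h \<Longrightarrow> continuous_on A f \<Longrightarrow> continuous_on A (\<lambda>x. h (f x))"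
  by (rule continuous_on_compose2[of UNIV h A f]) auto

lemma G0:
  fixes h :: "real \<times> real \<times> real \<Rightarrow> real" and F :: "real \<times> real \<Rightarrow> real"
  assumes h: "continuous_on UNIV h" and F: "\<And>y z. F (y,z) = integral {a0..b0} (\<lambda>x. h (x,y,z))"
  shows "integral ({a1..b1} \<times> {a2..b2}) F = integral ({a0..b0} \<times> {a1..b1} \<times> {a2..b2}) h"
proof -
  have c: "continuous_on (cbox (a0, (a1,a2)) (b0, (b1,b2))) h" using h by (rule continuous_on_subset) auto
  have "integral ({a0..b0} \<times> {a1..b1} \<times> {a2..b2}) h
      = integral (cbox a0 b0) (\<lambda>x. integral (cbox (a1,a2) (b1,b2)) (\<lambda>yz. h (x, yz)))"
    using integral_prod_continuous[OF c] by (simp add: cbox3)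
  also have "\<dots> = integral (cbox (a1,a2) (b1,b2)) (\<lambda>yz. integral (cbox a0 b0) (\<lambda>x. h (x, yz)))"
    by (rule integral_swap_continuous) (use c in \<open>simp add: case_prod_unfold\<close>)
  also have "\<dots> = integral ({a1..b1} \<times> {a2..b2}) F"
  proof -
    have Fe: "F = (\<lambda>yz. integral (cbox a0 b0) (\<lambda>x. h (x, yz)))"
      by (rule ext) (metis F cbox_interval surj_pair)
    show ?thesis by (simp add: Fe cbox2)
  qed
  finally show ?thesis by simp
qed


lemma G1:
  fixes h :: "real \<times> real \<times> real \<Rightarrow> real" and F :: "real \<times> real \<Rightarrow> real"
  assumes h: "continuous_on UNIV h" and Fc: "continuous_on UNIV F"
    and F: "\<And>x z. F (x,z) = integral {a1..b1} (\<lambda>y. h (x,y,z))"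
  shows "integral ({a0..b0} \<times> {a2..b2}) F = integral ({a0..b0} \<times> {a1..b1} \<times> {a2..b2}) h"
proof -
  have c: "continuous_on (cbox (a0, (a1,a2)) (b0, (b1,b2))) h" using h by (rule continuous_on_subset) auto
  have F': "\<And>x z. F (x,z) = integral (cbox a1 b1) (\<lambda>y. h (x,y,z))" by (simp only: F box_real)
  have cF: "continuous_on (cbox (a0, a2) (b0, b2)) F" using Fc by (rule continuous_on_subset) auto
  have "integral ({a0..b0} \<times> {a2..b2}) F = integral (cbox a0 b0) (\<lambda>x. integral (cbox a2 b2) (\<lambda>z. F (x,z)))"
    unfolding cbox2[symmetric] by (rule integral_prod_continuous[OF cF])
  also have "\<dots> = integral (cbox a0 b0) (\<lambda>x. integral (cbox a2 b2) (\<lambda>z. integral (cbox a1 b1) (\<lambda>y. h (x,y,z))))"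
    by (simp only: F')
  also have "\<dots> = integral (cbox a0 b0) (\<lambda>x. integral (cbox a1 b1) (\<lambda>y. integral (cbox a2 b2) (\<lambda>z. h (x,y,z))))"
  proof (rule integral_cong)
    fix x
    have "continuous_on UNIV (\<lambda>p::real\<times>real. h (x, snd p, fst p))"
      by (rule contc[OF h]) (intro continuous_intros)
    then have "continuous_on (cbox (a2,a1) (b2,b1)) (\<lambda>(z,y). h (x,y,z))"
      unfolding case_prod_unfold by (rule continuous_on_subset) simp
    then show "integral (cbox a2 b2) (\<lambda>z. integral (cbox a1 b1) (\<lambda>y. h (x,y,z))) =
          integral (cbox a1 b1) (\<lambda>y. integral (cbox a2 b2) (\<lambda>z. h (x,y,z)))"
      by (rule integral_swap_continuous[where f="\<lambda>z y. h (x,y,z)"])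
  qed
  also have "\<dots> = integral (cbox a0 b0) (\<lambda>x. integral (cbox (a1,a2) (b1,b2)) (\<lambda>yz. h (x,yz)))"
  proof (rule integral_cong)
    fix x
    have "continuous_on UNIV (\<lambda>yz::real\<times>real. h (x,yz))"
      by (rule contc[OF h]) (intro continuous_intros)
    then have "continuous_on (cbox (a1,a2) (b1,b2)) (\<lambda>yz. h (x,yz))"
      by (rule continuous_on_subset) simp
    from integral_prod_continuous[OF this] show "integral (cbox a1 b1) (\<lambda>y. integral (cbox a2 b2) (\<lambda>z. h (x,y,z))) =
          integral (cbox (a1,a2) (b1,b2)) (\<lambda>yz. h (x,yz))" by (rule sym)
  qed
  also have "\<dots> = integral ({a0..b0} \<times> {a1..b1} \<times> {a2..b2}) h"
    unfolding cbox3[symmetric] by (rule integral_prod_continuous[OF c, symmetric])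
  finally show ?thesis .
qed

lemma G2:
  fixes h :: "real \<times> real \<times> real \<Rightarrow> real" and F :: "real \<times> real \<Rightarrow> real"
  assumes h: "continuous_on UNIV h" and Fc: "continuous_on UNIV F"
    and F: "\<And>x y. F (x,y) = integral {a2..b2} (\<lambda>z. h (x,y,z))"
  shows "integral ({a0..b0} \<times> {a1..b1}) F = integral ({a0..b0} \<times> {a1..b1} \<times> {a2..b2}) h"
proof -
  have c: "continuous_on (cbox (a0, (a1,a2)) (b0, (b1,b2))) h" using h by (rule continuous_on_subset) auto
  have F': "\<And>x y. F (x,y) = integral (cbox a2 b2) (\<lambda>z. h (x,y,z))" by (simp only: F box_real)
  have cF: "continuous_on (cbox (a0, a1) (b0, b1)) F" using Fc by (rule continuous_on_subset) auto
  have "integral ({a0..b0} \<times> {a1..b1}) F = integral (cbox a0 b0) (\<lambda>x. integral (cbox a1 b1) (\<lambda>y. F (x,y)))"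
    unfolding cbox2[symmetric] by (rule integral_prod_continuous[OF cF])
  also have "\<dots> = integral (cbox a0 b0) (\<lambda>x. integral (cbox a1 b1) (\<lambda>y. integral (cbox a2 b2) (\<lambda>z. h (x,y,z))))"
    by (simp only: F')
  also have "\<dots> = integral (cbox a0 b0) (\<lambda>x. integral (cbox (a1,a2) (b1,b2)) (\<lambda>yz. h (x,yz)))"
  proof (rule integral_cong)
    fix x
    have "continuous_on UNIV (\<lambda>yz::real\<times>real. h (x,yz))"
      by (rule contc[OF h]) (intro continuous_intros)
    then have "continuous_on (cbox (a1,a2) (b1,b2)) (\<lambda>yz. h (x,yz))"
      by (rule continuous_on_subset) simp
    from integral_prod_continuous[OF this] show "integral (cbox a1 b1) (\<lambda>y. integral (cbox a2 b2) (\<lambda>z. h (x,y,z))) =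
          integral (cbox (a1,a2) (b1,b2)) (\<lambda>yz. h (x,yz))" by (rule sym)
  qed
  also have "\<dots> = integral ({a0..b0} \<times> {a1..b1} \<times> {a2..b2}) h"
    unfolding cbox3[symmetric] by (rule integral_prod_continuous[OF c, symmetric])
  finally show ?thesis .
qed


lemma integ2: "continuous_on UNIV (f :: real \<times> real \<Rightarrow> real) \<Longrightarrow> f integrable_on ({a..b} \<times> {c..d})"
  unfolding cbox2[symmetric] by (rule integrable_continuous) (rule continuous_on_subset, assumption, simp)

lemma hn_mono: assumes "grid_ok M L g" "a < 3" shows "hn g a (i - 1) \<le> hn g a i"
proof -
  have sm: "strict_mono (g a)" using assms unfolding grid_ok_def by auto
  have "g a (i - 1) < g a i" by (rule strict_monoD[OF sm]) simp
  moreover have "g a i < g a (i + 1)" by (rule strict_monoD[OF sm]) simp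
  ultimately show ?thesis unfolding hn_def by simp
qed

lemma hn_wrap: assumes "grid_ok M L g" "a < 3" shows "hn g a (int (M a) - 1) = hn g a (-1) + L a"
proof -
  have per: "\<And>i. g a (i + int (M a)) = g a i + L a" using assms unfolding grid_ok_def by blast
  have e1: "int (M a) - 1 = -1 + int (M a)" by simp
  have e2: "int (M a) - 1 + 1 = 0 + int (M a)" by simp
  have e3: "(-1::int) + 1 = 0" by simp
  have "hn g a (int (M a) - 1) = (g a (int (M a) - 1) + g a (int (M a) - 1 + 1)) / 2"
    unfolding hn_def ..
  also have "\<dots> = (g a (-1) + L a + (g a 0 + L a)) / 2"
  proof -
    have 1: "g a (int (M a) - 1) = g a (-1) + L a" by (subst e1) (rule per)
    have 2: "g a (int (M a) - 1 + 1) = g a 0 + L a" by (subst e2) (rule per)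
    show ?thesis by (simp only: 1 2)
  qed
  also have "\<dots> = hn g a (-1) + L a"
    unfolding hn_def e3 by (simp add: field_simps)
  finally show ?thesis .
qed

lemma hn_prv: assumes "grid_ok M L g" "a < 3" "i < M a"
  shows "hn g a (int ((i + M a - Suc 0) mod M a)) = (if i = 0 then hn g a (int i - 1) + L a else hn g a (int i - 1))"
proof (cases "i = 0")
  case True
  have m: "M a > 0" using assms(3) by linarith
  have e1: "i + M a - Suc 0 = M a - 1" using True by linarith
  have "M a - 1 < M a" using m by linarith
  then have e2: "(M a - 1) mod M a = M a - 1" by (rule mod_less)
  have e3: "int (M a - 1) = int (M a) - 1" using m by (simp add: of_nat_diff)
  have e4: "int i - 1 = -1" using True by simp
  show ?thesis unfolding e1 e2 e3 e4 using True hn_wrap[OF assms(1,2)] by simp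
next
  case False
  have e1: "i + M a - Suc 0 = (i - 1) + M a" using False by linarith
  have "i - 1 < M a" using assms(3) by linarith
  then have e2: "((i - 1) + M a) mod M a = i - 1" by simp
  have e3: "int (i - 1) = int i - 1" using False by (simp add: of_nat_diff)
  show ?thesis unfolding e1 e2 e3 using False by simp
qed

locale kern =
  fixes S :: "real^3 \<Rightarrow> real" and GS :: "real^3 \<Rightarrow> real^3"
  assumes S_diff: "\<forall>x. (S has_derivative (\<lambda>h. GS x \<bullet> h)) (at x)"
    and GS_cont: "continuous_on UNIV GS"
begin

lemma S_cont: "continuous_on UNIV S"
  by (rule continuous_at_imp_continuous_on) (use S_diff has_derivative_continuous in blast)

lemma ftc_dir:
  assumes "lo \<le> hi"
  shows "integral {lo..hi} (\<lambda>s. GS (s *\<^sub>R e + u) \<bullet> e) = S (hi *\<^sub>R e + u) - S (lo *\<^sub>R e + u)"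
proof -
  have "((\<lambda>s. S (s *\<^sub>R e + u)) has_vector_derivative (GS (s *\<^sub>R e + u) \<bullet> e)) (at s within {lo..hi})" for s
  proof -
    have d1: "((\<lambda>s. s *\<^sub>R e + u) has_derivative (\<lambda>h. h *\<^sub>R e)) (at s within {lo..hi})"
      by (auto intro!: derivative_eq_intros)
    have d2: "(S has_derivative (\<lambda>k. GS (s *\<^sub>R e + u) \<bullet> k)) (at (s *\<^sub>R e + u))"
      using S_diff by blast
    have "((\<lambda>s. S (s *\<^sub>R e + u)) has_derivative (\<lambda>h. GS (s *\<^sub>R e + u) \<bullet> (h *\<^sub>R e))) (at s within {lo..hi})"
      by (rule has_derivative_compose[OF d1 d2])
    then show ?thesis unfolding has_vector_derivative_def
      by (rule has_derivative_eq_rhs) (simp add: fun_eq_iff)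
  qed
  from fundamental_theorem_of_calculus[OF assms this]
  show ?thesis by (rule integral_unique)
qed

lemma ftc0: "lo \<le> hi \<Longrightarrow> integral {lo..hi} (\<lambda>x. GS (pt x y z - Y) $ 1) = S (pt hi y z - Y) - S (pt lo y z - Y)"
  using ftc_dir[of lo hi "pt 1 0 0" "pt 0 y z - Y"] by (simp add: inner_pt pt_shift(1)[symmetric])

lemma ftc1: "lo \<le> hi \<Longrightarrow> integral {lo..hi} (\<lambda>y. GS (pt x y z - Y) $ 2) = S (pt x hi z - Y) - S (pt x lo z - Y)"
  using ftc_dir[of lo hi "pt 0 1 0" "pt x 0 z - Y"] by (simp add: inner_pt pt_shift(2)[symmetric])

lemma ftc2: "lo \<le> hi \<Longrightarrow> integral {lo..hi} (\<lambda>z. GS (pt x y z - Y) $ 3) = S (pt x y hi - Y) - S (pt x y lo - Y)"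
  using ftc_dir[of lo hi "pt 0 0 1" "pt x y 0 - Y"] by (simp add: inner_pt pt_shift(3)[symmetric])

end


context kern begin

definition "Sper L \<longleftrightarrow> (\<forall>x. S (x + pt (L 0) 0 0) = S x \<and> S (x + pt 0 (L 1) 0) = S x \<and> S (x + pt 0 0 (L 2)) = S x)"

lemma per0: assumes "Sper L" shows "S (pt (c + L 0) y z - Y) = S (pt c y z - Y)"
proof -
  have e: "pt (c + L 0) y z - Y = (pt c y z - Y) + pt (L 0) 0 0" by (simp add: vec_eq_iff forall_3)
  show ?thesis unfolding e using assms unfolding Sper_def by blast
qed

lemma per1: assumes "Sper L" shows "S (pt x (c + L 1) z - Y) = S (pt x c z - Y)"
proof -
  have e: "pt x (c + L 1) z - Y = (pt x c z - Y) + pt 0 (L 1) 0" by (simp add: vec_eq_iff forall_3)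
  show ?thesis unfolding e using assms unfolding Sper_def by blast
qed

lemma per2: assumes "Sper L" shows "S (pt x y (c + L 2) - Y) = S (pt x y c - Y)"
proof -
  have e: "pt x y (c + L 2) - Y = (pt x y c - Y) + pt 0 0 (L 2)" by (simp add: vec_eq_iff forall_3)
  show ?thesis unfolding e using assms unfolding Sper_def by blast
qed

lemma face0:
  assumes grid: "grid_ok M L g" and P: "Sper L" and n: "(i,j,k) \<in> Idx M"
  shows "bdiff M 0 (R2 g (kshift S Y) 0) (i,j,k) =
    integral ({hn g 1 (int j - 1)..hn g 1 (int j)} \<times> {hn g 2 (int k - 1)..hn g 2 (int k)})
      (\<lambda>(y,z). S (pt (hn g 0 (int i)) y z - Y) - S (pt (hn g 0 (int i - 1)) y z - Y))"
proof -
  let ?BC = "{hn g 1 (int j - 1)..hn g 1 (int j)} \<times> {hn g 2 (int k - 1)..hn g 2 (int k)}"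
  have i: "i < M 0" using n by (simp add: Idx_def)
  have up: "R2 g (kshift S Y) 0 (i,j,k) = integral ?BC (\<lambda>(y,z). S (pt (hn g 0 (int i)) y z - Y))"
    by (simp add: R2_def kshift_def)
  have "R2 g (kshift S Y) 0 (prv M 0 (i,j,k)) =
     integral ?BC (\<lambda>(y,z). S (pt (hn g 0 (int ((i + M 0 - Suc 0) mod M 0))) y z - Y))"
    by (simp add: R2_def kshift_def prv_def)
  also have "\<dots> = integral ?BC (\<lambda>(y,z). S (pt (hn g 0 (int i - 1)) y z - Y))"
  proof (cases "i = 0")
    case True
    have hp: "hn g 0 (int ((i + M 0 - Suc 0) mod M 0)) = hn g 0 (int i - 1) + L 0"
      using hn_prv[OF grid _ i] True by simp
    show ?thesis unfolding hp per0[OF P] ..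
  next
    case False
    have hp: "hn g 0 (int ((i + M 0 - Suc 0) mod M 0)) = hn g 0 (int i - 1)"
      using hn_prv[OF grid _ i] False by simp
    show ?thesis unfolding hp ..
  qed
  finally have lo: "R2 g (kshift S Y) 0 (prv M 0 (i,j,k)) = integral ?BC (\<lambda>(y,z). S (pt (hn g 0 (int i - 1)) y z - Y))" .
  have c: "continuous_on UNIV (\<lambda>p. S (pt c (fst p) (snd p) - Y))" for c
    by (rule contc[OF S_cont]) (intro continuous_intros)
  show ?thesis unfolding bdiff_def up lo case_prod_unfold
    by (rule integral_diff[symmetric]) (intro integ2 c)+
qed

lemma face1:
  assumes grid: "grid_ok M L g" and P: "Sper L" and n: "(i,j,k) \<in> Idx M"
  shows "bdiff M 1 (R2 g (kshift S Y) 1) (i,j,k) =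
    integral ({hn g 0 (int i - 1)..hn g 0 (int i)} \<times> {hn g 2 (int k - 1)..hn g 2 (int k)})
      (\<lambda>(x,z). S (pt x (hn g 1 (int j)) z - Y) - S (pt x (hn g 1 (int j - 1)) z - Y))"
proof -
  let ?BC = "{hn g 0 (int i - 1)..hn g 0 (int i)} \<times> {hn g 2 (int k - 1)..hn g 2 (int k)}"
  have j: "j < M 1" using n by (simp add: Idx_def)
  have up: "R2 g (kshift S Y) 1 (i,j,k) = integral ?BC (\<lambda>(x,z). S (pt x (hn g 1 (int j)) z - Y))"
    by (simp add: R2_def kshift_def)
  have "R2 g (kshift S Y) 1 (prv M 1 (i,j,k)) =
     integral ?BC (\<lambda>(x,z). S (pt x (hn g 1 (int ((j + M 1 - Suc 0) mod M 1))) z - Y))"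
    by (simp add: R2_def kshift_def prv_def)
  also have "\<dots> = integral ?BC (\<lambda>(x,z). S (pt x (hn g 1 (int j - 1)) z - Y))"
  proof (cases "j = 0")
    case True
    have hp: "hn g 1 (int ((j + M 1 - Suc 0) mod M 1)) = hn g 1 (int j - 1) + L 1"
      using hn_prv[OF grid _ j] True by simp
    show ?thesis unfolding hp per1[OF P] ..
  next
    case False
    have hp: "hn g 1 (int ((j + M 1 - Suc 0) mod M 1)) = hn g 1 (int j - 1)"
      using hn_prv[OF grid _ j] False by simp
    show ?thesis unfolding hp ..
  qed
  finally have lo: "R2 g (kshift S Y) 1 (prv M 1 (i,j,k)) = integral ?BC (\<lambda>(x,z). S (pt x (hn g 1 (int j - 1)) z - Y))" .
  have c: "continuous_on UNIV (\<lambda>p. S (pt (fst p) c (snd p) - Y))" for c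
    by (rule contc[OF S_cont]) (intro continuous_intros)
  show ?thesis unfolding bdiff_def up lo case_prod_unfold
    by (rule integral_diff[symmetric]) (intro integ2 c)+
qed

lemma face2:
  assumes grid: "grid_ok M L g" and P: "Sper L" and n: "(i,j,k) \<in> Idx M"
  shows "bdiff M 2 (R2 g (kshift S Y) 2) (i,j,k) =
    integral ({hn g 0 (int i - 1)..hn g 0 (int i)} \<times> {hn g 1 (int j - 1)..hn g 1 (int j)})
      (\<lambda>(x,y). S (pt x y (hn g 2 (int k)) - Y) - S (pt x y (hn g 2 (int k - 1)) - Y))"
proof -
  let ?BC = "{hn g 0 (int i - 1)..hn g 0 (int i)} \<times> {hn g 1 (int j - 1)..hn g 1 (int j)}"
  have k: "k < M 2" using n by (simp add: Idx_def)
  have up: "R2 g (kshift S Y) 2 (i,j,k) = integral ?BC (\<lambda>(x,y). S (pt x y (hn g 2 (int k)) - Y))"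
    by (simp add: R2_def kshift_def)
  have "R2 g (kshift S Y) 2 (prv M 2 (i,j,k)) =
     integral ?BC (\<lambda>(x,y). S (pt x y (hn g 2 (int ((k + M 2 - Suc 0) mod M 2))) - Y))"
    by (simp add: R2_def kshift_def prv_def)
  also have "\<dots> = integral ?BC (\<lambda>(x,y). S (pt x y (hn g 2 (int k - 1)) - Y))"
  proof (cases "k = 0")
    case True
    have hp: "hn g 2 (int ((k + M 2 - Suc 0) mod M 2)) = hn g 2 (int k - 1) + L 2"
      using hn_prv[OF grid _ k] True by simp
    show ?thesis unfolding hp per2[OF P] ..
  next
    case False
    have hp: "hn g 2 (int ((k + M 2 - Suc 0) mod M 2)) = hn g 2 (int k - 1)"
      using hn_prv[OF grid _ k] False by simp
    show ?thesis unfolding hp ..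
  qed
  finally have lo: "R2 g (kshift S Y) 2 (prv M 2 (i,j,k)) = integral ?BC (\<lambda>(x,y). S (pt x y (hn g 2 (int k - 1)) - Y))" .
  have c: "continuous_on UNIV (\<lambda>p. S (pt (fst p) (snd p) c - Y))" for c
    by (rule contc[OF S_cont]) (intro continuous_intros)
  show ?thesis unfolding bdiff_def up lo case_prod_unfold
    by (rule integral_diff[symmetric]) (intro integ2 c)+
qed

end


context kern begin

lemma hcont: "continuous_on UNIV (\<lambda>(x,y,z). GS (pt x y z - Y) $ c)"
  unfolding case_prod_unfold
  by (rule continuous_on_component, rule contc[OF GS_cont]) (intro continuous_intros)

lemma I0:
  assumes grid: "grid_ok M L g" and P: "Sper L" and n: "(i,j,k) \<in> Idx M"
  shows "integral ({hn g 0 (int i - 1)..hn g 0 (int i)} \<times> {hn g 1 (int j - 1)..hn g 1 (int j)} \<times> {hn g 2 (int k - 1)..hn g 2 (int k)})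
      (\<lambda>(x,y,z). GS (pt x y z - Y) $ 1) = bdiff M 0 (R2 g (kshift S Y) 0) (i,j,k)"
proof -
  have m: "hn g 0 (int i - 1) \<le> hn g 0 (int i)" using hn_mono[OF grid, of 0 "int i"] by simp
  show ?thesis unfolding face0[OF grid P n]
    by (rule sym, rule G0[OF hcont]) (simp only: case_prod_conv ftc0[OF m])
qed

lemma I1:
  assumes grid: "grid_ok M L g" and P: "Sper L" and n: "(i,j,k) \<in> Idx M"
  shows "integral ({hn g 0 (int i - 1)..hn g 0 (int i)} \<times> {hn g 1 (int j - 1)..hn g 1 (int j)} \<times> {hn g 2 (int k - 1)..hn g 2 (int k)})
      (\<lambda>(x,y,z). GS (pt x y z - Y) $ 2) = bdiff M 1 (R2 g (kshift S Y) 1) (i,j,k)"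
proof -
  have m: "hn g 1 (int j - 1) \<le> hn g 1 (int j)" using hn_mono[OF grid, of 1 "int j"] by simp
  have Fc: "continuous_on UNIV (\<lambda>(x,z). S (pt x c z - Y) - S (pt x d z - Y))" for c d
    unfolding case_prod_unfold
    by (intro continuous_on_diff; rule contc[OF S_cont]; intro continuous_intros)
  show ?thesis unfolding face1[OF grid P n]
    by (rule sym, rule G1[OF hcont Fc]) (simp only: case_prod_conv ftc1[OF m])
qed

lemma I2:
  assumes grid: "grid_ok M L g" and P: "Sper L" and n: "(i,j,k) \<in> Idx M"
  shows "integral ({hn g 0 (int i - 1)..hn g 0 (int i)} \<times> {hn g 1 (int j - 1)..hn g 1 (int j)} \<times> {hn g 2 (int k - 1)..hn g 2 (int k)})
      (\<lambda>(x,y,z). GS (pt x y z - Y) $ 3) = bdiff M 2 (R2 g (kshift S Y) 2) (i,j,k)"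
proof -
  have m: "hn g 2 (int k - 1) \<le> hn g 2 (int k)" using hn_mono[OF grid, of 2 "int k"] by simp
  have Fc: "continuous_on UNIV (\<lambda>(x,y). S (pt x y c - Y) - S (pt x y d - Y))" for c d
    unfolding case_prod_unfold
    by (intro continuous_on_diff; rule contc[OF S_cont]; intro continuous_intros)
  show ?thesis unfolding face2[OF grid P n]
    by (rule sym, rule G2[OF hcont Fc]) (simp only: case_prod_conv ftc2[OF m])
qed

end


context kern begin

lemma R3_deriv:
  assumes grid: "grid_ok M L g" and P: "Sper L" and n: "n \<in> Idx M"
  shows "((\<lambda>Y. R3 g (kshift S Y) n) has_derivative
           (\<lambda>h. - (\<Sum>a<3. comp3 h a * bdiff M a (R2 g (kshift S Y0) a) n))) (at Y0)"
proof -
  obtain i j k where nijk: "n = (i,j,k)" by (cases n) auto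
  note n' = n[unfolded nijk]
  define x0 where "x0 = hn g 0 (int i - 1)"
  define x1 where "x1 = hn g 0 (int i)"
  define y0 where "y0 = hn g 1 (int j - 1)"
  define y1 where "y1 = hn g 1 (int j)"
  define z0 where "z0 = hn g 2 (int k - 1)"
  define z1 where "z1 = hn g 2 (int k)"
  define PP where "PP = (\<lambda>t::real\<times>real\<times>real. pt (fst t) (fst (snd t)) (snd (snd t)))"
  have PPc: "continuous_on A PP" for A unfolding PP_def by (intro continuous_intros)
  let ?B = "cbox (x0,y0,z0) (x1,y1,z1)"
  define fx where "fx = (\<lambda>Y t. - blinfun_inner_left (GS (PP t - Y)))"
  have R3e: "R3 g (kshift S Y) n = integral ?B (\<lambda>t. S (PP t - Y))" for Y
    unfolding nijk R3_def kshift_def cbox3 PP_def x0_def x1_def y0_def y1_def z0_def z1_def case_prod_unfold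
    by simp
  have fxd: "((\<lambda>Y. S (PP t - Y)) has_derivative blinfun_apply (fx Y t)) (at Y within UNIV)" for Y t
  proof -
    have d1: "((\<lambda>Y. PP t - Y) has_derivative (\<lambda>h. - h)) (at Y within UNIV)"
      by (auto intro!: derivative_eq_intros)
    have d2: "(S has_derivative (\<lambda>k. GS (PP t - Y) \<bullet> k)) (at (PP t - Y))"
      using S_diff by blast
    from has_derivative_compose[OF d1 d2] show ?thesis
      by (rule has_derivative_eq_rhs) (simp add: fx_def fun_eq_iff inner_commute uminus_blinfun.rep_eq)
  qed
  have fint: "(\<lambda>t. S (PP t - Y)) integrable_on ?B" for Y
    by (rule integrable_continuous, rule contc[OF S_cont]) (intro continuous_intros PPc)
  have fxc: "continuous_on (UNIV \<times> ?B) (\<lambda>(Y, t). fx Y t)"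
    unfolding fx_def case_prod_unfold
    by (intro continuous_intros, rule contc[OF GS_cont]) (intro continuous_intros continuous_on_compose2[OF PPc[of UNIV]], auto)
  have L: "((\<lambda>Y. integral ?B (\<lambda>t. S (PP t - Y))) has_derivative blinfun_apply (integral ?B (fx Y0))) (at Y0 within UNIV)"
    by (rule leibniz_rule[where fx=fx]) (use fxd fint fxc in auto)
  have fxi: "fx Y0 integrable_on ?B"
    unfolding fx_def
    by (rule integrable_continuous) (intro continuous_intros, rule contc[OF GS_cont], intro continuous_intros PPc)
  have Ga: "((\<lambda>t. GS (PP t - Y0) $ c) has_integral integral ?B (\<lambda>t. GS (PP t - Y0) $ c)) ?B" for c
    by (rule integrable_integral, rule integrable_continuous)
       (intro continuous_intros, rule contc[OF GS_cont], intro continuous_intros PPc)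
  have Ieq: "integral ?B (\<lambda>t. GS (PP t - Y0) $ c) =
     integral ({x0..x1} \<times> {y0..y1} \<times> {z0..z1}) (\<lambda>(x,y,z). GS (pt x y z - Y0) $ c)" for c
    unfolding cbox3 PP_def case_prod_unfold ..
  have I0': "integral ?B (\<lambda>t. GS (PP t - Y0) $ 1) = bdiff M 0 (R2 g (kshift S Y0) 0) n"
    unfolding Ieq unfolding nijk x0_def x1_def y0_def y1_def z0_def z1_def by (rule I0[OF grid P n'])
  have I1': "integral ?B (\<lambda>t. GS (PP t - Y0) $ 2) = bdiff M 1 (R2 g (kshift S Y0) 1) n"
    unfolding Ieq unfolding nijk x0_def x1_def y0_def y1_def z0_def z1_def by (rule I1[OF grid P n'])
  have I2': "integral ?B (\<lambda>t. GS (PP t - Y0) $ 3) = bdiff M 2 (R2 g (kshift S Y0) 2) n"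
    unfolding Ieq unfolding nijk x0_def x1_def y0_def y1_def z0_def z1_def by (rule I2[OF grid P n'])
  have D: "blinfun_apply (integral ?B (fx Y0)) h = - (\<Sum>a<3. comp3 h a * bdiff M a (R2 g (kshift S Y0) a) n)" for h
  proof -
    have "blinfun_apply (integral ?B (fx Y0)) h = integral ?B (\<lambda>t. blinfun_apply (fx Y0 t) h)"
      by (rule blinfun_apply_integral[OF fxi])
    also have "\<dots> = integral ?B (\<lambda>t. - (h $ 1 * GS (PP t - Y0) $ 1 + h $ 2 * GS (PP t - Y0) $ 2 + h $ 3 * GS (PP t - Y0) $ 3))"
      by (simp add: fx_def uminus_blinfun.rep_eq inner3)
    also have "\<dots> = - (h $ 1 * integral ?B (\<lambda>t. GS (PP t - Y0) $ 1) + h $ 2 * integral ?B (\<lambda>t. GS (PP t - Y0) $ 2)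
                + h $ 3 * integral ?B (\<lambda>t. GS (PP t - Y0) $ 3))"
      by (rule integral_unique, intro has_integral_neg has_integral_add has_integral_mult_right Ga)
    also have "\<dots> = - (\<Sum>a<3. comp3 h a * bdiff M a (R2 g (kshift S Y0) a) n)"
      unfolding I0' I1' I2' sum3 comp3_def by simp
    finally show ?thesis .
  qed
  show ?thesis
    unfolding R3e by (rule has_derivative_eq_rhs[OF L]) (rule ext, rule D)
qed

end


lemma ddiv_neg: "ddiv M (\<lambda>a m. - X a m) n = - ddiv M X n"
  unfolding ddiv_def fdiff_def by (simp add: sum_negf[symmetric])

lemma ddiv_dual_diff: "ddiv_dual M (\<lambda>a m. X a m - Y a m) n = ddiv_dual M X n - ddiv_dual M Y n"
  unfolding ddiv_dual_def bdiff_def by (simp only: sum_subtractf[symmetric]) (rule sum.cong, simp_all)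

lemma J_div:
  "ddiv_dual M (\<lambda>a m. \<Sum>p\<in>P. c p * (v p a * r p a m)) n
     = (\<Sum>p\<in>P. c p * (\<Sum>a<3. v p a * bdiff M a (r p a) n))"
proof -
  have "ddiv_dual M (\<lambda>a m. \<Sum>p\<in>P. c p * (v p a * r p a m)) n
      = (\<Sum>a<3. \<Sum>p\<in>P. c p * (v p a * bdiff M a (r p a) n))"
    unfolding ddiv_dual_def bdiff_def
    by (rule sum.cong[OF refl]) (simp add: sum_subtractf[symmetric] right_diff_distrib)
  also have "\<dots> = (\<Sum>p\<in>P. \<Sum>a<3. c p * (v p a * bdiff M a (r p a) n))"
    by (rule sum.swap)
  also have "\<dots> = (\<Sum>p\<in>P. c p * (\<Sum>a<3. v p a * bdiff M a (r p a) n))"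
    by (simp add: sum_distrib_left)
  finally show ?thesis .
qed

lemma comp3_scale: "comp3 (r *\<^sub>R v) a = r * comp3 v a"
  by (simp add: comp3_def)

theorem lemma2:
  fixes M :: "nat \<Rightarrow> nat" and L :: "nat \<Rightarrow> real" and g :: "nat \<Rightarrow> int \<Rightarrow> real"
    and H2 Ht2 :: "nat \<times> idx \<Rightarrow> nat \<times> idx \<Rightarrow> real"
    and S :: "real^3 \<Rightarrow> real" and GS :: "real^3 \<Rightarrow> real^3"
    and Np :: nat and w :: "nat \<Rightarrow> real" and q m :: real
    and T :: "real set"
    and X V :: "real \<Rightarrow> nat \<Rightarrow> real^3"
    and D B :: "real \<Rightarrow> nat \<Rightarrow> idx \<Rightarrow> real"
  assumes grid: "grid_ok M L g"
    and H2: "spd M H2" and Ht2: "spd M Ht2"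
    and S_diff: "\<forall>x. (S has_derivative (\<lambda>h. GS x \<bullet> h)) (at x)"
    and S_cont: "continuous_on UNIV GS"
    and S_per: "\<forall>x. S (x + pt (L 0) 0 0) = S x \<and> S (x + pt 0 (L 1) 0) = S x
                   \<and> S (x + pt 0 0 (L 2)) = S x"
    and w_pos: "\<forall>p\<in>{1..Np}. 0 < w p" and m_pos: "0 < m"
    and T_int: "is_interval T" and T0: "0 \<in> T"
    and C1_part: "\<forall>p\<in>{1..Np}. \<forall>c. c1_on T (\<lambda>t. X t p $ c) \<and> c1_on T (\<lambda>t. V t p $ c)"
    and C1_field: "\<forall>a<3. \<forall>n\<in>Idx M. c1_on T (\<lambda>t. D t a n) \<and> c1_on T (\<lambda>t. B t a n)"
    and eqX: "\<forall>p\<in>{1..Np}. \<forall>t\<in>T. ((\<lambda>s. X s p) has_vector_derivative V t p) (at t within T)"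
    and eqV: "\<forall>p\<in>{1..Np}. \<forall>t\<in>T. ((\<lambda>s. V s p) has_vector_derivative
                 (q / m) *\<^sub>R (efield_p M g Ht2 (D t) (kshift S (X t p))
                     + cross3 (V t p) (bfield_p M g (B t) (kshift S (X t p))))) (at t within T)"
    and eqB: "\<forall>a<3. \<forall>n\<in>Idx M. \<forall>t\<in>T. ((\<lambda>s. B s a n) has_real_derivative
                 - curl M (mat_app Ht2 M (D t)) a n) (at t within T)"
    and eqD: "\<forall>a<3. \<forall>n\<in>Idx M. \<forall>t\<in>T. ((\<lambda>s. D s a n) has_real_derivative
                 curl_T M (mat_app H2 M (B t)) a n
                 - (\<Sum>p\<in>{1..Np}. w p * q * (comp3 (V t p) a * R2 g (kshift S (X t p)) a n)))
                 (at t within T)"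
    and init_D: "\<forall>n\<in>Idx M. ddiv_dual M (D 0) n = (\<Sum>p\<in>{1..Np}. w p * q * R3 g (kshift S (X 0 p)) n)"
    and init_B: "\<forall>n\<in>Idx M. ddiv M (B 0) n = 0"
  shows "\<forall>t\<in>T. (\<forall>n\<in>Idx M. ddiv_dual M (D t) n = (\<Sum>p\<in>{1..Np}. w p * q * R3 g (kshift S (X t p)) n))
             \<and> (\<forall>n\<in>Idx M. ddiv M (B t) n = 0)"
proof -
  have Mpos: "\<forall>a<3. 0 < M a" using grid unfolding grid_ok_def by blast
  interpret kern S GS using S_diff S_cont by unfold_locales auto
  have P: "Sper L" unfolding Sper_def using S_per by blast
  have cvx: "convex T" using T_int by (rule is_interval_convex)
  have partB: "\<forall>t\<in>T. ddiv M (B t) n = 0" if n: "n \<in> Idx M" for n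
  proof -
    have "((\<lambda>s. ddiv M (B s) n) has_real_derivative 0) (at t within T)" if t: "t \<in> T" for t
    proof -
      have d: "((\<lambda>s. ddiv M (B s) n) has_real_derivative
          ddiv M (\<lambda>a m. - curl M (mat_app Ht2 M (D t)) a m) n) (at t within T)"
        unfolding ddiv_def fdiff_def
        by (intro DERIV_sum DERIV_diff) (use eqB nxt_Idx[OF Mpos n] n t in auto)
      then show ?thesis by (simp add: ddiv_neg ddiv_curl)
    qed
    then obtain c where c: "\<forall>t\<in>T. ddiv M (B t) n = c"
      using has_field_derivative_zero_constant[OF cvx] by blast
    then have "c = 0" using init_B n T0 by auto
    then show ?thesis using c by simp
  qed
  have partD: "\<forall>t\<in>T. ddiv_dual M (D t) n = (\<Sum>p\<in>{1..Np}. w p * q * R3 g (kshift S (X t p)) n)"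
    if n: "n \<in> Idx M" for n
  proof -
    let ?phi = "\<lambda>t. ddiv_dual M (D t) n - (\<Sum>p\<in>{1..Np}. w p * q * R3 g (kshift S (X t p)) n)"
    have "(?phi has_real_derivative 0) (at t within T)" if t: "t \<in> T" for t
    proof -
      define J where "J = (\<lambda>a m. \<Sum>p\<in>{1..Np}. w p * q * (comp3 (V t p) a * R2 g (kshift S (X t p)) a m))"
      define R3' where "R3' = (\<lambda>p. - (\<Sum>a<3. comp3 (V t p) a * bdiff M a (R2 g (kshift S (X t p)) a) n))"
      have dD: "((\<lambda>s. ddiv_dual M (D s) n) has_real_derivative
          ddiv_dual M (\<lambda>a m. curl_T M (mat_app H2 M (B t)) a m - J a m) n) (at t within T)"
        unfolding ddiv_dual_def bdiff_def J_def
        by (intro DERIV_sum DERIV_diff) (use eqD prv_Idx[OF Mpos n] n t in auto)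
      have dR: "((\<lambda>s. R3 g (kshift S (X s p)) n) has_real_derivative R3' p) (at t within T)"
        if p: "p \<in> {1..Np}" for p
      proof -
        have dX: "((\<lambda>s. X s p) has_derivative (\<lambda>r. r *\<^sub>R V t p)) (at t within T)"
          using eqX p t unfolding has_vector_derivative_def by blast
        have dY: "((\<lambda>Y. R3 g (kshift S Y) n) has_derivative
           (\<lambda>h. - (\<Sum>a<3. comp3 h a * bdiff M a (R2 g (kshift S (X t p)) a) n))) (at (X t p))"
          by (rule R3_deriv[OF grid P n])
        from has_derivative_compose[OF dX dY] show ?thesis
          unfolding has_field_derivative_def
          by (rule has_derivative_eq_rhs)
             (simp add: fun_eq_iff R3'_def comp3_scale sum_distrib_left algebra_simps)
      qed
      have dS: "((\<lambda>s. \<Sum>p\<in>{1..Np}. w p * q * R3 g (kshift S (X s p)) n) has_real_derivative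
          (\<Sum>p\<in>{1..Np}. w p * q * R3' p)) (at t within T)"
        by (intro DERIV_sum DERIV_cmult dR)
      have "ddiv_dual M (\<lambda>a m. curl_T M (mat_app H2 M (B t)) a m - J a m) n - (\<Sum>p\<in>{1..Np}. w p * q * R3' p) = 0"
      proof -
        have "ddiv_dual M (\<lambda>a m. curl_T M (mat_app H2 M (B t)) a m - J a m) n
            = - ddiv_dual M J n"
          unfolding ddiv_dual_diff using ddiv_curl_T[OF Mpos n] by simp
        also have "ddiv_dual M J n = (\<Sum>p\<in>{1..Np}. w p * q *
               (\<Sum>a<3. comp3 (V t p) a * bdiff M a (R2 g (kshift S (X t p)) a) n))"
          unfolding J_def by (rule J_div)
        finally show ?thesis by (simp add: R3'_def sum_negf)
      qed
      then show ?thesis using DERIV_diff[OF dD dS] by simp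
    qed
    then obtain c where c: "\<forall>t\<in>T. ?phi t = c"
      using has_field_derivative_zero_constant[OF cvx] by blast
    then have "c = 0" using init_D n T0 by auto
    then show ?thesis using c by simp
  qed
  show ?thesis using partB partD by blast
qed


end
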